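(* Let $G=(V,E)$ be a graph. Assume there exists an isomorphism $f:\mathcal{A}(G)\to\mathcal{A}_{RW}(G)$ of the form $f(e_i)=\alpha_i e_{\pi(i)}$ for all $i\in V$, where $\alpha_i\neq 0$ are scalars and $\pi$ is a permutation of $V$. Then $G$ is a biregular graph or a regular graph.
   Context: Graphs are simple (no loops or multiple edges), connected, with countable (finite or infinite) vertex set $V$, and locally finite ($\deg(i)<\infty$ for all $i$, where $\deg(i)$ is the number of neighbors of $i$). The adjacency matrix is $A=(a_{ij})$ with $a_{ij}=1$ if $i,j$ are neighbors and $0$ otherwise. $G$ is regular if all vertices have the same degree. $G$ is biregular if it is bipartite with a bipartition $V=V_1\sqcup V_2$ (every edge joins $V_1$ to $V_2$) such that any two vertices on the same side have the same degree. An evolution algebra over $\mathbb{R}$ is an algebra with a countable basis $\{e_i\}$ (natural basis) such that $e_i\cdot e_j=0$ for $i\ne j$ and $e_i\cdot e_i=\sum_k c_{ik}e_k$. $\mathcal{A}(G)$ has natural basis $\{e_i:i\in V\}$ with $e_i\cdot e_i=\sum_{k\in V}a_{ik}e_k$; $\mathcal{A}_{RW}(G)$ has natural basis $\{e_i:i\in V\}$ with $e_i\cdot e_i=\sum_{k\in V}\frac{a_{ik}}{\deg(i)}e_k$; in both, $e_i\cdot e_j=0$ for $i\ne j$. An isomorphism is a bijective linear map preserving the product. *)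

theory Defs
  imports Complex_Main "HOL-Library.Countable_Set"
begin

definition graph :: "'a set \<Rightarrow> ('a \<Rightarrow> 'a \<Rightarrow> bool) \<Rightarrow> bool" where
  "graph V adj \<longleftrightarrow> countable V
     \<and> (\<forall>i j. adj i j \<longrightarrow> i \<in> V \<and> j \<in> V)
     \<and> (\<forall>i j. adj i j \<longrightarrow> adj j i)
     \<and> (\<forall>i. \<not> adj i i)
     \<and> (\<forall>i\<in>V. finite {j. adj i j})
     \<and> (\<forall>i\<in>V. \<forall>j\<in>V. adj\<^sup>*\<^sup>* i j)"

definition deg :: "('a \<Rightarrow> 'a \<Rightarrow> bool) \<Rightarrow> 'a \<Rightarrow> nat" where
  "deg adj i = card {j. adj i j}"

text \<open>Adjacency matrix entries, and the structure constants of A(G) and A_RW(G).\<close>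
definition adjm :: "('a \<Rightarrow> 'a \<Rightarrow> bool) \<Rightarrow> 'a \<Rightarrow> 'a \<Rightarrow> real" where
  "adjm adj i k = (if adj i k then 1 else 0)"

definition adjm_rw :: "('a \<Rightarrow> 'a \<Rightarrow> bool) \<Rightarrow> 'a \<Rightarrow> 'a \<Rightarrow> real" where
  "adjm_rw adj i k = adjm adj i k / real (deg adj i)"

definition regular :: "'a set \<Rightarrow> ('a \<Rightarrow> 'a \<Rightarrow> bool) \<Rightarrow> bool" where
  "regular V adj \<longleftrightarrow> (\<exists>d. \<forall>i\<in>V. deg adj i = d)"

definition biregular :: "'a set \<Rightarrow> ('a \<Rightarrow> 'a \<Rightarrow> bool) \<Rightarrow> bool" where
  "biregular V adj \<longleftrightarrow> (\<exists>V1 V2. V1 \<union> V2 = V \<and> V1 \<inter> V2 = {}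
     \<and> (\<forall>i j. adj i j \<longrightarrow> (i \<in> V1 \<and> j \<in> V2) \<or> (i \<in> V2 \<and> j \<in> V1))
     \<and> (\<forall>i\<in>V1. \<forall>j\<in>V1. deg adj i = deg adj j)
     \<and> (\<forall>i\<in>V2. \<forall>j\<in>V2. deg adj i = deg adj j))"

text \<open>Evolution algebra with natural basis indexed by V: elements are finitely
supported real functions on V (coordinates w.r.t. the natural basis).\<close>
definition vecs :: "'a set \<Rightarrow> ('a \<Rightarrow> real) set" where
  "vecs V = {x. finite {i. x i \<noteq> 0} \<and> (\<forall>i. i \<notin> V \<longrightarrow> x i = 0)}"

definition basis_vec :: "'a \<Rightarrow> 'a \<Rightarrow> real" where
  "basis_vec i = (\<lambda>k. if k = i then 1 else 0)"

text \<open>Product with e_i e_j = 0 (i /= j), e_i e_i = sum_k C i k e_k, extended bilinearly.\<close>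
definition evo_mult :: "('a \<Rightarrow> 'a \<Rightarrow> real) \<Rightarrow> ('a \<Rightarrow> real) \<Rightarrow> ('a \<Rightarrow> real) \<Rightarrow> ('a \<Rightarrow> real)" where
  "evo_mult C x y = (\<lambda>k. \<Sum>i\<in>{i. x i \<noteq> 0}. x i * y i * C i k)"

definition evo_iso :: "'a set \<Rightarrow> ('a \<Rightarrow> 'a \<Rightarrow> real) \<Rightarrow> ('a \<Rightarrow> 'a \<Rightarrow> real)
    \<Rightarrow> (('a \<Rightarrow> real) \<Rightarrow> ('a \<Rightarrow> real)) \<Rightarrow> bool" where
  "evo_iso V C D f \<longleftrightarrow> bij_betw f (vecs V) (vecs V)
     \<and> (\<forall>x\<in>vecs V. \<forall>y\<in>vecs V. f (\<lambda>k. x k + y k) = (\<lambda>k. f x k + f y k))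
     \<and> (\<forall>c. \<forall>x\<in>vecs V. f (\<lambda>k. c * x k) = (\<lambda>k. c * f x k))
     \<and> (\<forall>x\<in>vecs V. \<forall>y\<in>vecs V. f (evo_mult C x y) = evo_mult D (f x) (f y))"

end

theory Submission
  imports Defs
begin

theorem proposition2p11:
  fixes V :: "'a set" and adj :: "'a \<Rightarrow> 'a \<Rightarrow> bool"
    and f :: "('a \<Rightarrow> real) \<Rightarrow> ('a \<Rightarrow> real)"
    and \<alpha> :: "'a \<Rightarrow> real" and \<pi> :: "'a \<Rightarrow> 'a"
  assumes "graph V adj"
    and "bij_betw \<pi> V V"
    and "\<forall>i\<in>V. \<alpha> i \<noteq> 0"
    and "evo_iso V (adjm adj) (adjm_rw adj) f"
    and "\<forall>i\<in>V. f (basis_vec i) = (\<lambda>k. \<alpha> i * basis_vec (\<pi> i) k)"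
  shows "biregular V adj \<or> regular V adj"
proof -
  have inV: "\<And>i j. adj i j \<Longrightarrow> i \<in> V \<and> j \<in> V" using assms(1) unfolding graph_def by blast
  have sym: "\<And>i j. adj i j \<Longrightarrow> adj j i" using assms(1) unfolding graph_def by blast
  have fin: "\<And>i. i \<in> V \<Longrightarrow> finite {j. adj i j}" using assms(1) unfolding graph_def by blast
  have conn: "\<And>i j. i \<in> V \<Longrightarrow> j \<in> V \<Longrightarrow> adj\<^sup>*\<^sup>* i j" using assms(1) unfolding graph_def by blast
  have add: "\<And>x y. x \<in> vecs V \<Longrightarrow> y \<in> vecs V \<Longrightarrow> f (\<lambda>k. x k + y k) = (\<lambda>k. f x k + f y k)"
    using assms(4) unfolding evo_iso_def by blast
  have hom: "\<And>c x. x \<in> vecs V \<Longrightarrow> f (\<lambda>k. c * x k) = (\<lambda>k. c * f x k)"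
    using assms(4) unfolding evo_iso_def by blast
  have mul: "\<And>x y. x \<in> vecs V \<Longrightarrow> y \<in> vecs V \<Longrightarrow> f (evo_mult (adjm adj) x y) = evo_mult (adjm_rw adj) (f x) (f y)"
    using assms(4) unfolding evo_iso_def by blast
  have z: "(\<lambda>k. 0::real) \<in> vecs V" unfolding vecs_def by simp
  have f0: "f (\<lambda>k. 0) = (\<lambda>k. 0)"
    using hom[OF z, of 0] by simp
  have bvec: "\<And>i. i \<in> V \<Longrightarrow> basis_vec i \<in> vecs V"
  proof -
    fix i assume "i \<in> V"
    have "{j. basis_vec i j \<noteq> 0} = {i}" unfolding basis_vec_def by auto
    then show "basis_vec i \<in> vecs V" using \<open>i \<in> V\<close> unfolding vecs_def basis_vec_def by auto
  qed
  have sumvec: "\<And>S. finite S \<Longrightarrow> S \<subseteq> V \<Longrightarrow> (\<lambda>x. \<Sum>k\<in>S. basis_vec k x) \<in> vecs V"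
  proof -
    fix S :: "'a set" assume "finite S" "S \<subseteq> V"
    have "{x. (\<Sum>k\<in>S. basis_vec k x) \<noteq> 0} \<subseteq> S"
      unfolding basis_vec_def using \<open>finite S\<close> by (auto simp: sum.delta' split: if_splits)
    then show "(\<lambda>x. \<Sum>k\<in>S. basis_vec k x) \<in> vecs V"
      using \<open>finite S\<close> \<open>S \<subseteq> V\<close> unfolding vecs_def
      by (auto intro: finite_subset)
  qed
  have fsum: "\<And>S. finite S \<Longrightarrow> S \<subseteq> V \<Longrightarrow> f (\<lambda>x. \<Sum>k\<in>S. basis_vec k x) = (\<lambda>x. \<Sum>k\<in>S. f (basis_vec k) x)"
  proof -
    fix S :: "'a set" assume "finite S" "S \<subseteq> V"
    then show "f (\<lambda>x. \<Sum>k\<in>S. basis_vec k x) = (\<lambda>x. \<Sum>k\<in>S. f (basis_vec k) x)"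
    proof (induction S rule: finite_induct)
      case empty
      then show ?case using f0 by simp
    next
      case (insert a F)
      have "f (\<lambda>x. \<Sum>k\<in>insert a F. basis_vec k x) = f (\<lambda>x. basis_vec a x + (\<Sum>k\<in>F. basis_vec k x))"
        using insert by simp
      also have "\<dots> = (\<lambda>x. f (basis_vec a) x + f (\<lambda>x. \<Sum>k\<in>F. basis_vec k x) x)"
        using add[OF bvec sumvec] insert by auto
      also have "\<dots> = (\<lambda>x. \<Sum>k\<in>insert a F. f (basis_vec k) x)"
        using insert by simp
      finally show ?case .
    qed
  qed
  have sq: "\<And>C (i::'a). evo_mult C (basis_vec i) (basis_vec i) = C i"
  proof -
    fix C :: "'a \<Rightarrow> 'a \<Rightarrow> real" and i :: 'a
    have "{j. basis_vec i j \<noteq> 0} = {i}" unfolding basis_vec_def by auto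
    then show "evo_mult C (basis_vec i) (basis_vec i) = C i"
      unfolding evo_mult_def by (simp add: basis_vec_def)
  qed
  have fsq: "\<And>i. i \<in> V \<Longrightarrow> evo_mult (adjm_rw adj) (f (basis_vec i)) (f (basis_vec i))
      = (\<lambda>k. \<alpha> i * \<alpha> i * adjm_rw adj (\<pi> i) k)"
  proof -
    fix i assume i: "i \<in> V"
    have "{j. \<alpha> i * basis_vec (\<pi> i) j \<noteq> 0} = {\<pi> i}" using assms(3) i unfolding basis_vec_def by auto
    then show "evo_mult (adjm_rw adj) (f (basis_vec i)) (f (basis_vec i))
      = (\<lambda>k. \<alpha> i * \<alpha> i * adjm_rw adj (\<pi> i) k)"
      using assms(5) i unfolding evo_mult_def by (simp add: basis_vec_def)
  qed
  have NV: "\<And>i. {j. adj i j} \<subseteq> V" using inV by blast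
  have finall: "\<And>i. finite {j. adj i j}"
    by (metis (no_types, lifting) Collect_empty_eq fin finite.emptyI inV)
  have row: "\<And>i. adjm adj i = (\<lambda>x. \<Sum>k\<in>{j. adj i j}. basis_vec k x)"
    unfolding adjm_def basis_vec_def using finall by (auto simp: sum.delta')
  have injp: "inj_on \<pi> V" using assms(2) bij_betw_def by blast
  have key: "\<And>i k. i \<in> V \<Longrightarrow> k \<in> V \<Longrightarrow> adjm adj i k * \<alpha> k = \<alpha> i * \<alpha> i * adjm_rw adj (\<pi> i) (\<pi> k)"
  proof -
    fix i k assume i: "i \<in> V" and k: "k \<in> V"
    have "f (adjm adj i) = (\<lambda>x. \<alpha> i * \<alpha> i * adjm_rw adj (\<pi> i) x)"
      using mul[OF bvec[OF i] bvec[OF i]] sq fsq[OF i] by simp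
    moreover have "f (adjm adj i) = (\<lambda>x. \<Sum>j\<in>{j. adj i j}. \<alpha> j * basis_vec (\<pi> j) x)"
    proof -
      have "f (adjm adj i) = (\<lambda>x. \<Sum>j\<in>{j. adj i j}. f (basis_vec j) x)"
        using row fsum[OF fin[OF i] NV] by simp
      also have "\<dots> = (\<lambda>x. \<Sum>j\<in>{j. adj i j}. \<alpha> j * basis_vec (\<pi> j) x)"
        using assms(5) inV by (intro ext sum.cong) auto
      finally show ?thesis .
    qed
    ultimately have e: "(\<Sum>j\<in>{j. adj i j}. \<alpha> j * basis_vec (\<pi> j) (\<pi> k)) = \<alpha> i * \<alpha> i * adjm_rw adj (\<pi> i) (\<pi> k)"
      by metis
    have "(\<Sum>j\<in>{j. adj i j}. \<alpha> j * basis_vec (\<pi> j) (\<pi> k)) = (\<Sum>j\<in>{j. adj i j}. if k = j then \<alpha> j else 0)"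
    proof (rule sum.cong)
      fix j assume "j \<in> {j. adj i j}"
      then have "j \<in> V" using NV by blast
      then have "(\<pi> k = \<pi> j) = (k = j)" using injp k inj_on_eq_iff by metis
      then show "\<alpha> j * basis_vec (\<pi> j) (\<pi> k) = (if k = j then \<alpha> j else 0)"
        unfolding basis_vec_def by simp
    qed simp
    also have "\<dots> = adjm adj i k * \<alpha> k" unfolding adjm_def using fin[OF i] by (simp add: sum.delta)
    finally show "adjm adj i k * \<alpha> k = \<alpha> i * \<alpha> i * adjm_rw adj (\<pi> i) (\<pi> k)" using e by simp
  qed
  have piV: "\<And>i. i \<in> V \<Longrightarrow> \<pi> i \<in> V" using assms(2) bij_betwE by blast
  have auto1: "\<And>i k. adj i k \<Longrightarrow> adj (\<pi> i) (\<pi> k) \<and> \<alpha> k = \<alpha> i * \<alpha> i / real (deg adj (\<pi> i))"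
  proof -
    fix i k assume a: "adj i k"
    have i: "i \<in> V" and k: "k \<in> V" using inV[OF a] by auto
    have "\<alpha> k = \<alpha> i * \<alpha> i * adjm_rw adj (\<pi> i) (\<pi> k)" using key[OF i k] a by (simp add: adjm_def)
    moreover have "\<alpha> k \<noteq> 0" using assms(3) k by auto
    ultimately show "adj (\<pi> i) (\<pi> k) \<and> \<alpha> k = \<alpha> i * \<alpha> i / real (deg adj (\<pi> i))"
      unfolding adjm_rw_def adjm_def by (auto split: if_splits)
  qed
  have degpos: "\<And>i k. adj i k \<Longrightarrow> deg adj i > 0"
  proof -
    fix i k assume a: "adj i k"
    have "finite {j. adj i j}" using fin inV[OF a] by blast
    moreover have "k \<in> {j. adj i j}" using a by simp
    ultimately show "deg adj i > 0" unfolding deg_def by (auto simp: card_gt_0_iff)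
  qed
  have auto2: "\<And>i k. i \<in> V \<Longrightarrow> k \<in> V \<Longrightarrow> adj (\<pi> i) (\<pi> k) \<Longrightarrow> adj i k"
  proof (rule ccontr)
    fix i k assume i: "i \<in> V" and k: "k \<in> V" and a: "adj (\<pi> i) (\<pi> k)" and n: "\<not> adj i k"
    have "0 = \<alpha> i * \<alpha> i * adjm_rw adj (\<pi> i) (\<pi> k)" using key[OF i k] n by (simp add: adjm_def)
    moreover have "adjm_rw adj (\<pi> i) (\<pi> k) \<noteq> 0" using degpos[OF a] a unfolding adjm_rw_def adjm_def by simp
    moreover have "\<alpha> i \<noteq> 0" using assms(3) i by auto
    ultimately show False by simp
  qed
  have degeq: "\<And>i. i \<in> V \<Longrightarrow> deg adj (\<pi> i) = deg adj i"
  proof -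
    fix i assume i: "i \<in> V"
    have "bij_betw \<pi> {j. adj i j} {j. adj (\<pi> i) j}"
      unfolding bij_betw_def
    proof
      show "inj_on \<pi> {j. adj i j}" using injp NV inj_on_subset by blast
      show "\<pi> ` {j. adj i j} = {j. adj (\<pi> i) j}"
      proof
        show "\<pi> ` {j. adj i j} \<subseteq> {j. adj (\<pi> i) j}" using auto1 by blast
        show "{j. adj (\<pi> i) j} \<subseteq> \<pi> ` {j. adj i j}"
        proof
          fix l assume "l \<in> {j. adj (\<pi> i) j}"
          then have l: "adj (\<pi> i) l" by simp
          then have "l \<in> V" using inV by blast
          then obtain k where k: "k \<in> V" "l = \<pi> k" using assms(2) unfolding bij_betw_def by blast
          then have "adj i k" using auto2[OF i k(1)] l by simp
          then show "l \<in> \<pi> ` {j. adj i j}" using k by blast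
        qed
      qed
    qed
    then show "deg adj (\<pi> i) = deg adj i" unfolding deg_def using bij_betw_same_card by metis
  qed
  have rel: "\<And>i k. adj i k \<Longrightarrow> \<alpha> k * real (deg adj i) = \<alpha> i * \<alpha> i"
  proof -
    fix i k assume a: "adj i k"
    have "\<alpha> k = \<alpha> i * \<alpha> i / real (deg adj i)" using auto1[OF a] degeq inV[OF a] by simp
    then show "\<alpha> k * real (deg adj i) = \<alpha> i * \<alpha> i" using degpos[OF a] by simp
  qed
  have nbr: "\<And>i k k'. adj i k \<Longrightarrow> adj i k' \<Longrightarrow> deg adj k = deg adj k'"
  proof -
    fix i k k' assume a: "adj i k" and b: "adj i k'"
    have "\<alpha> k = \<alpha> k'" using rel[OF a] rel[OF b] degpos[OF a]
      by (metis less_irrefl mult_right_cancel of_nat_0_eq_iff)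
    moreover have "\<alpha> i * real (deg adj k) = \<alpha> k * \<alpha> k" using rel[OF sym[OF a]] .
    moreover have "\<alpha> i * real (deg adj k') = \<alpha> k' * \<alpha> k'" using rel[OF sym[OF b]] .
    moreover have "\<alpha> i \<noteq> 0" using assms(3) inV[OF a] by auto
    ultimately have "real (deg adj k) = real (deg adj k')" by (metis mult_left_cancel)
    then show "deg adj k = deg adj k'" by simp
  qed
  show ?thesis
  proof (cases "V = {}")
    case True
    then show ?thesis unfolding regular_def by simp
  next
    case False
    then obtain v0 where v0: "v0 \<in> V" by blast
    show ?thesis
    proof (cases "\<exists>w. adj v0 w")
      case False
      have "\<forall>j\<in>V. j = v0"
      proof
        fix j assume "j \<in> V"
        then have "adj\<^sup>*\<^sup>* v0 j" using conn v0 by blast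
        then show "j = v0" using False by (cases rule: converse_rtranclpE) auto
      qed
      then have "\<forall>j\<in>V. deg adj j = deg adj v0" by auto
      then show ?thesis unfolding regular_def by blast
    next
      case True
      then obtain w0 where w0: "adj v0 w0" by blast
      define d1 where "d1 = deg adj v0"
      define d2 where "d2 = deg adj w0"
      have claim: "\<And>j. adj\<^sup>*\<^sup>* v0 j \<Longrightarrow> (deg adj j = d1 \<and> (\<forall>m. adj j m \<longrightarrow> deg adj m = d2))
          \<or> (deg adj j = d2 \<and> (\<forall>m. adj j m \<longrightarrow> deg adj m = d1))"
      proof -
        fix j assume "adj\<^sup>*\<^sup>* v0 j"
        then show "(deg adj j = d1 \<and> (\<forall>m. adj j m \<longrightarrow> deg adj m = d2))
          \<or> (deg adj j = d2 \<and> (\<forall>m. adj j m \<longrightarrow> deg adj m = d1))"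
        proof (induction rule: rtranclp_induct)
          case base
          then show ?case using nbr w0 d1_def d2_def by blast
        next
          case (step y z)
          then show ?case using nbr sym by metis
        qed
      qed
      have cl: "\<And>j. j \<in> V \<Longrightarrow> (deg adj j = d1 \<and> (\<forall>m. adj j m \<longrightarrow> deg adj m = d2))
          \<or> (deg adj j = d2 \<and> (\<forall>m. adj j m \<longrightarrow> deg adj m = d1))"
        using claim conn v0 by blast
      show ?thesis
      proof (cases "d1 = d2")
        case True
        then have "\<forall>j\<in>V. deg adj j = d1" using cl by auto
        then show ?thesis unfolding regular_def by blast
      next
        case False
        have "biregular V adj"
          unfolding biregular_def
          apply (rule exI[of _ "{j\<in>V. deg adj j = d1}"])
          apply (rule exI[of _ "{j\<in>V. deg adj j \<noteq> d1}"])
          apply (intro conjI)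
          apply blast
          apply blast
          subgoal
          proof (intro allI impI)
            fix i j assume a: "adj i j"
            then have "i \<in> V" "j \<in> V" using inV by auto
            then show "(i \<in> {j \<in> V. deg adj j = d1} \<and> j \<in> {j \<in> V. deg adj j \<noteq> d1}) \<or>
              (i \<in> {j \<in> V. deg adj j \<noteq> d1} \<and> j \<in> {j \<in> V. deg adj j = d1})"
              using cl[of i] a False by auto
          qed
          apply blast
          subgoal proof (intro ballI)
            fix i j assume "i \<in> {j \<in> V. deg adj j \<noteq> d1}" "j \<in> {j \<in> V. deg adj j \<noteq> d1}"
            then have "deg adj i = d2" "deg adj j = d2" using cl by blast+
            then show "deg adj i = deg adj j" by simp
          qed
          done
        then show ?thesis by blast
      qed
    qed
  qed
qed

end
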